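(* Let $D$ be a connected link diagram with $n$ ordered crossings, let $\mathbb{G}$ be its all-$A$ ribbon graph described by the permutations $(\sigma_0,\sigma_1,\sigma_2)$ of $\{1,\dots,2n\}$ as in the context, and let $\mathbb{Q}$ be a quasi-tree of $\mathbb{G}$. Define the permutation $\sigma$ of $\{1,\dots,2n\}$ by $$\sigma(i)=\begin{cases}\sigma_0(i) & \text{if } i\notin\mathbb{Q},\\ \sigma_2^{-1}(i) & \text{if } i\in\mathbb{Q}.\end{cases}$$ Then $\mathbb{Q}$ corresponds to the ordered chord diagram $C_{\mathbb{Q}}$ whose consecutive markings in the positive direction are given by $\sigma$ (i.e. the marks read $i,\sigma(i),\sigma^2(i),\dots$ around the circle, with chords joining $2k-1$ and $2k$ for each $k$); this chord diagram parametrizes the single boundary curve $\gamma_{\mathbb{Q}}$ of the ribbon surface of $\mathbb{Q}$, each half-edge being marked once along $\gamma_{\mathbb{Q}}$.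
   Context: Let $D$ be a connected link diagram with crossings numbered $1,\dots,n$. Each crossing has an $A$-smoothing and a $B$-smoothing (Kauffman's convention); the all-$A$ state smooths every crossing by $A$. Position each crossing so its strands are parallel to $y=x$ and $y=-x$; the $i$-th crossing gives two half-edges labelled $2i-1$ and $2i$, marked on the all-$A$ state circles near the crossing in the half-planes $y>x$ and $y<x$ respectively. Orient each all-$A$ state circle counterclockwise if it is nested inside an even number of other state circles and clockwise otherwise (this is the positive direction). Let $\sigma_0$ be the permutation of $\{1,\dots,2n\}$ sending each mark to the next mark met going in the positive direction along its state circle, $\sigma_1=\prod_{i=1}^n(2i-1,\,2i)$, and $\sigma_2=\sigma_1\circ\sigma_0^{-1}$. The all-$A$ ribbon graph $\mathbb{G}$ has the orbits of $\sigma_0$ (the all-$A$ state circles) as vertices, the orbits of $\sigma_1$ (crossings) as edges, with cyclic order at vertices given by $\sigma_0$; as a surface it consists of a disk for each vertex and an untwisted band for each edge, forming an orientable surface. A spanning subgraph $\mathbb{H}$ has all vertices of $\mathbb{G}$ and a subset of its edges; a half-edge $i$ is said to be in $\mathbb{H}$ if its edge is. The faces of $\mathbb{H}$ are the boundary components of the surface formed by the vertex disks and the bands of edges of $\mathbb{H}$. A quasi-tree is a spanning subgraph with exactly one face; for a quasi-tree $\mathbb{Q}$, $\gamma_{\mathbb{Q}}$ denotes this single boundary curve. An ordered chord diagram is a circle marked with $\{1,\dots,2n\}$ in some order with chords joining each pair $\{2i-1,2i\}$. *)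

theory Defs
  imports "HOL-Combinatorics.Combinatorics"
begin

text \<open>Half-edges (marks) are 1..2n; crossing/edge k carries half-edges 2k-1 and 2k.\<close>

definition edge_of :: "nat \<Rightarrow> nat" where
  "edge_of i = (i + 1) div 2"

definition sigma1 :: "nat \<Rightarrow> nat \<Rightarrow> nat" where
  "sigma1 n i = (if i \<in> {1..2*n} then (if odd i then i + 1 else i - 1) else i)"

definition sigma2 :: "nat \<Rightarrow> (nat \<Rightarrow> nat) \<Rightarrow> nat \<Rightarrow> nat" where
  "sigma2 n s0 = sigma1 n \<circ> inv s0"

definition ribbon_connected :: "nat \<Rightarrow> (nat \<Rightarrow> nat) \<Rightarrow> bool" where
  "ribbon_connected n s0 \<longleftrightarrow>
     (\<forall>i\<in>{1..2*n}. \<forall>j\<in>{1..2*n}.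
        (i, j) \<in> ({(a, s0 a) | a. a \<in> {1..2*n}} \<union> {(a, sigma1 n a) | a. a \<in> {1..2*n}})\<^sup>*)"

text \<open>Combinatorial model of the boundary of the ribbon surface of a spanning subgraph H
  (a set of edges).  If the edge of mark i is not in H, the vertex circle passes through
  the point Pt i.  If it is in H, the band is attached around mark i, and the boundary
  has the two points Pre i (just before the band, in the positive direction of the
  vertex circle) and Post i (just after it).\<close>
datatype bpt = Pt nat | Pre nat | Post nat

definition in_sub :: "nat set \<Rightarrow> nat \<Rightarrow> bool" where
  "in_sub H i \<longleftrightarrow> edge_of i \<in> H"

definition bpts :: "nat \<Rightarrow> nat set \<Rightarrow> bpt set" where
  "bpts n H = {Pt i | i. i \<in> {1..2*n} \<and> \<not> in_sub H i}
             \<union> {Pre i | i. i \<in> {1..2*n} \<and> in_sub H i}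
             \<union> {Post i | i. i \<in> {1..2*n} \<and> in_sub H i}"

text \<open>The point at which the boundary curve, travelling in the positive direction along
  the vertex circle, reaches (and marks) half-edge i.\<close>
definition arr :: "nat set \<Rightarrow> nat \<Rightarrow> bpt" where
  "arr H i = (if in_sub H i then Pre i else Pt i)"

text \<open>Successor along the boundary: along a vertex arc to the next mark (sigma_0),
  or across a band side (untwisted band, orientable surface) to the other end.\<close>
fun bnext :: "nat \<Rightarrow> (nat \<Rightarrow> nat) \<Rightarrow> nat set \<Rightarrow> bpt \<Rightarrow> bpt" where
  "bnext n s0 H (Pt i) = arr H (s0 i)"
| "bnext n s0 H (Post i) = arr H (s0 i)"
| "bnext n s0 H (Pre i) = Post (sigma1 n i)"

text \<open>Faces = boundary components = orbits of the boundary successor.\<close>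
definition faces :: "nat \<Rightarrow> (nat \<Rightarrow> nat) \<Rightarrow> nat set \<Rightarrow> bpt set set" where
  "faces n s0 H = (\<lambda>p. orbit (bnext n s0 H) p) ` bpts n H"

definition quasi_tree :: "nat \<Rightarrow> (nat \<Rightarrow> nat) \<Rightarrow> nat set \<Rightarrow> bool" where
  "quasi_tree n s0 Q \<longleftrightarrow> Q \<subseteq> {1..n} \<and> card (faces n s0 Q) = 1"

definition sigmaQ :: "nat \<Rightarrow> (nat \<Rightarrow> nat) \<Rightarrow> nat set \<Rightarrow> nat \<Rightarrow> nat" where
  "sigmaQ n s0 Q i = (if i \<in> {1..2*n}
      then (if in_sub Q i then inv (sigma2 n s0) i else s0 i) else i)"

text \<open>An ordered chord diagram with markings 1..2n read in the order given by a
  permutation s: s permutes {1..2n} in one cycle (chords join 2k-1 and 2k implicitly).\<close>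
definition ordered_chord_diagram :: "nat \<Rightarrow> (nat \<Rightarrow> nat) \<Rightarrow> bool" where
  "ordered_chord_diagram n s \<longleftrightarrow> s permutes {1..2*n} \<and> cyclic_on s {1..2*n}"

end

theory Submission
  imports Defs
begin

lemma odd_le: "odd (i::nat) \<Longrightarrow> i \<le> 2*n \<Longrightarrow> Suc i \<le> 2*n" by presburger

lemma s1_inv[simp]: "sigma1 n (sigma1 n i) = i"
  unfolding sigma1_def by (auto dest: odd_le)

lemma s1_in: "i \<in> {1..2*n} \<Longrightarrow> sigma1 n i \<in> {1..2*n}"
  unfolding sigma1_def by (auto dest: odd_le)

lemma s1_edge: "edge_of (sigma1 n i) = edge_of i"
  unfolding sigma1_def edge_of_def by (auto elim!: oddE evenE)

lemma s1_sub: "in_sub Q (sigma1 n i) = in_sub Q i"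
  unfolding in_sub_def using s1_edge by metis

lemma s1_comp: "sigma1 n \<circ> sigma1 n = id" by (auto simp: fun_eq_iff)

lemma s1_bij: "bij (sigma1 n)"
  by (rule o_bij[OF s1_comp s1_comp])

lemma s1_invf: "inv (sigma1 n) = sigma1 n"
  by (rule inv_unique_comp[OF s1_comp s1_comp])

lemma sig2_inv:
  assumes "s0 permutes S"
  shows "inv (sigma2 n s0) = s0 \<circ> sigma1 n"
proof -
  have b: "bij s0" using assms permutes_bij by blast
  have "inv (sigma1 n \<circ> inv s0) = inv (inv s0) \<circ> inv (sigma1 n)"
    by (rule o_inv_distrib) (auto simp: s1_bij bij_imp_bij_inv b)
  then show ?thesis unfolding sigma2_def using b s1_invf by (simp add: inv_inv_eq)
qed

lemma arr_inj: "arr H i = arr H j \<Longrightarrow> i = j"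
  unfolding arr_def by (auto split: if_splits)

lemma arr_nPost: "arr H i \<noteq> Post x" unfolding arr_def by simp

lemma sigmaQ_eq:
  assumes "s0 permutes {1..2*n}"
  shows "sigmaQ n s0 Q = s0 \<circ> (\<lambda>i. if i \<in> {1..2*n} \<and> in_sub Q i then sigma1 n i else i)"
proof
  fix i
  show "sigmaQ n s0 Q i = (s0 \<circ> (\<lambda>i. if i \<in> {1..2*n} \<and> in_sub Q i then sigma1 n i else i)) i"
    using sig2_inv[OF assms, of n] permutes_not_in[OF assms, of i]
    unfolding sigmaQ_def by auto
qed

lemma tau_permutes:
  "(\<lambda>i. if i \<in> {1..2*n} \<and> in_sub Q i then sigma1 n i else i) permutes {1..2*n}"
  (is "?t permutes ?S")
proof -
  have tt: "?t (?t x) = x" for x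
    using s1_in[of x n] s1_sub[of Q n x] by auto
  show ?thesis unfolding permutes_def
  proof (intro conjI allI impI)
    fix y show "\<exists>!x. ?t x = y"
    proof (rule ex1I[of _ "?t y"])
      show "?t (?t y) = y" by (rule tt)
      fix x assume h: "?t x = y"
      have "x = ?t (?t x)" by (rule tt[symmetric])
      also have "\<dots> = ?t y" by (simp only: h)
      finally show "x = ?t y" .
    qed
  next
    fix x assume "x \<notin> {1..2*n}" then show "?t x = x" by auto
  qed
qed

lemma sigmaQ_permutes:
  assumes "s0 permutes {1..2*n}"
  shows "sigmaQ n s0 Q permutes {1..2*n}"
  using sigmaQ_eq[OF assms] tau_permutes permutes_compose[OF tau_permutes assms] by metis

lemma sigmaQ_in:
  assumes "s0 permutes {1..2*n}"
  shows "i \<in> {1..2*n} \<Longrightarrow> (sigmaQ n s0 Q ^^ t) i \<in> {1..2*n}"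
  using sigmaQ_permutes[OF assms] permutes_in_funpow_image by metis

lemma step1:
  assumes "s0 permutes {1..2*n}" "i \<in> {1..2*n}"
  shows "\<exists>k>0. (bnext n s0 Q ^^ k) (arr Q i) = arr Q (sigmaQ n s0 Q i)
           \<and> (\<forall>m. 0 < m \<and> m < k \<longrightarrow> (bnext n s0 Q ^^ m) (arr Q i) \<notin> arr Q ` {1..2*n})"
proof (cases "in_sub Q i")
  case True
  have e: "sigmaQ n s0 Q i = s0 (sigma1 n i)"
    using sigmaQ_eq[OF assms(1)] assms(2) True by simp
  have a1: "bnext n s0 Q (arr Q i) = Post (sigma1 n i)"
    using True by (simp add: arr_def)
  have "(bnext n s0 Q ^^ 2) (arr Q i) = bnext n s0 Q (Post (sigma1 n i))"
    using a1 by (simp add: numeral_2_eq_2)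
  also have "\<dots> = arr Q (sigmaQ n s0 Q i)" using e by simp
  finally have A: "(bnext n s0 Q ^^ 2) (arr Q i) = arr Q (sigmaQ n s0 Q i)" .
  have B: "\<forall>m. 0 < m \<and> m < 2 \<longrightarrow> (bnext n s0 Q ^^ m) (arr Q i) \<notin> arr Q ` {1..2*n}"
  proof (intro allI impI)
    fix m :: nat assume "0 < m \<and> m < 2"
    then have "m = 1" by auto
    then have "(bnext n s0 Q ^^ m) (arr Q i) = Post (sigma1 n i)" using a1 by simp
    then show "(bnext n s0 Q ^^ m) (arr Q i) \<notin> arr Q ` {1..2*n}"
      using arr_nPost by (metis imageE)
  qed
  show ?thesis by (rule exI[of _ 2], rule conjI, simp, rule conjI, rule A, rule B)
next
  case False
  have e: "sigmaQ n s0 Q i = s0 i"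
    using sigmaQ_eq[OF assms(1)] assms(2) False by simp
  have A: "(bnext n s0 Q ^^ 1) (arr Q i) = arr Q (sigmaQ n s0 Q i)"
    using False e by (simp add: arr_def)
  have B: "\<forall>m. 0 < m \<and> m < 1 \<longrightarrow> (bnext n s0 Q ^^ m) (arr Q i) \<notin> arr Q ` {1..2*n}"
    by simp
  show ?thesis by (rule exI[of _ 1], rule conjI, simp, rule conjI, rule A, rule B)
qed

lemma stepT:
  assumes "s0 permutes {1..2*n}" "i \<in> {1..2*n}"
  shows "\<exists>k\<ge>t. (bnext n s0 Q ^^ k) (arr Q i) = arr Q ((sigmaQ n s0 Q ^^ t) i)"
proof (induction t)
  case 0 show ?case by (intro exI[of _ 0]) auto
next
  case (Suc t)
  then obtain k where k: "k \<ge> t" "(bnext n s0 Q ^^ k) (arr Q i) = arr Q ((sigmaQ n s0 Q ^^ t) i)"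
    by blast
  obtain k' where k': "k' > 0" "(bnext n s0 Q ^^ k') (arr Q ((sigmaQ n s0 Q ^^ t) i))
      = arr Q (sigmaQ n s0 Q ((sigmaQ n s0 Q ^^ t) i))"
    using step1[OF assms(1) sigmaQ_in[OF assms]] by blast
  have "(bnext n s0 Q ^^ (k' + k)) (arr Q i) = arr Q ((sigmaQ n s0 Q ^^ Suc t) i)"
    using k k' by (simp add: funpow_add)
  moreover have "k' + k \<ge> Suc t" using k(1) k'(1) by linarith
  ultimately show ?case by (intro exI[of _ "k'+k"] conjI)
qed

lemma invariant:
  assumes "s0 permutes {1..2*n}" "i \<in> {1..2*n}"
  shows "\<exists>t. (bnext n s0 Q ^^ k) (arr Q i) = arr Q ((sigmaQ n s0 Q ^^ t) i)
           \<or> ((bnext n s0 Q ^^ k) (arr Q i) = Post (sigma1 n ((sigmaQ n s0 Q ^^ t) i))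
               \<and> in_sub Q ((sigmaQ n s0 Q ^^ t) i))"
proof (induction k)
  case 0 show ?case by (intro exI[of _ 0]) auto
next
  case (Suc k)
  then obtain t where t: "(bnext n s0 Q ^^ k) (arr Q i) = arr Q ((sigmaQ n s0 Q ^^ t) i)
           \<or> ((bnext n s0 Q ^^ k) (arr Q i) = Post (sigma1 n ((sigmaQ n s0 Q ^^ t) i))
               \<and> in_sub Q ((sigmaQ n s0 Q ^^ t) i))" by blast
  define x where "x = (sigmaQ n s0 Q ^^ t) i"
  have xS: "x \<in> {1..2*n}" unfolding x_def using sigmaQ_in[OF assms] .
  have sx: "sigmaQ n s0 Q x = (if in_sub Q x then s0 (sigma1 n x) else s0 x)"
    using sigmaQ_eq[OF assms(1)] xS by simp
  have sx2: "(sigmaQ n s0 Q ^^ Suc t) i = sigmaQ n s0 Q x" unfolding x_def by simp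
  have sxx: "(sigmaQ n s0 Q ^^ Suc t) i = (if in_sub Q x then s0 (sigma1 n x) else s0 x)"
    using sx sx2 by simp
  have bS: "(bnext n s0 Q ^^ Suc k) (arr Q i) = bnext n s0 Q ((bnext n s0 Q ^^ k) (arr Q i))"
    by simp
  from t[folded x_def] show ?case
  proof
    assume a: "(bnext n s0 Q ^^ k) (arr Q i) = arr Q x"
    show ?case
    proof (cases "in_sub Q x")
      case True
      have *: "(bnext n s0 Q ^^ Suc k) (arr Q i) = Post (sigma1 n x) \<and> in_sub Q x"
        using a bS True by (simp add: arr_def)
      show ?thesis by (rule exI[of _ t], rule disjI2, rule *[unfolded x_def])
    next
      case False
      have *: "(bnext n s0 Q ^^ Suc k) (arr Q i) = arr Q ((sigmaQ n s0 Q ^^ Suc t) i)"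
        using a bS sxx False by (simp add: arr_def)
      show ?thesis by (rule exI[of _ "Suc t"], rule disjI1, rule *)
    qed
  next
    assume a: "(bnext n s0 Q ^^ k) (arr Q i) = Post (sigma1 n x) \<and> in_sub Q x"
    have *: "(bnext n s0 Q ^^ Suc k) (arr Q i) = arr Q ((sigmaQ n s0 Q ^^ Suc t) i)"
      using a bS sxx by simp
    show ?case by (rule exI[of _ "Suc t"], rule disjI1, rule *)
  qed
qed

theorem proposition1:
  fixes n :: nat and s0 :: "nat \<Rightarrow> nat" and Q :: "nat set"
  assumes "n \<ge> 1"
    and "s0 permutes {1..2*n}"
    and "ribbon_connected n s0"
    and "quasi_tree n s0 Q"
  shows "ordered_chord_diagram n (sigmaQ n s0 Q)
       \<and> (\<exists>\<gamma>. faces n s0 Q = {\<gamma>}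
            \<and> arr Q ` {1..2*n} \<subseteq> \<gamma>
            \<and> inj_on (arr Q) {1..2*n}
            \<and> (\<forall>i\<in>{1..2*n}. \<exists>k>0.
                 (bnext n s0 Q ^^ k) (arr Q i) = arr Q (sigmaQ n s0 Q i)
                 \<and> (\<forall>m. 0 < m \<and> m < k \<longrightarrow> (bnext n s0 Q ^^ m) (arr Q i) \<notin> arr Q ` {1..2*n})))"
proof -
  let ?S = "{1..2*n}"
  let ?s = "sigmaQ n s0 Q"
  let ?b = "bnext n s0 Q"
  have sp: "?s permutes ?S" using sigmaQ_permutes[OF assms(2)] .
  have perm: "permutation ?s" using sp permutation_permutes by blast
  obtain \<gamma> where g: "faces n s0 Q = {\<gamma>}"
    using assms(4) unfolding quasi_tree_def by (meson card_1_singletonE)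
  have arrb: "arr Q i \<in> bpts n Q" if "i \<in> ?S" for i
  proof (cases "in_sub Q i")
    case True
    then have "Pre i \<in> {Pre i | i. i \<in> {1..2*n} \<and> in_sub Q i}" using that by blast
    then show ?thesis using True unfolding bpts_def arr_def by simp
  next
    case False
    then have "Pt i \<in> {Pt i | i. i \<in> {1..2*n} \<and> \<not> in_sub Q i}" using that by blast
    then show ?thesis using False unfolding bpts_def arr_def by simp
  qed
  have og: "orbit ?b (arr Q i) = \<gamma>" if "i \<in> ?S" for i
  proof -
    have "orbit ?b (arr Q i) \<in> faces n s0 Q" unfolding faces_def using arrb[OF that] by (rule imageI)
    then show ?thesis using g by simp
  qed
  have self: "arr Q i \<in> orbit ?b (arr Q i)" if i: "i \<in> ?S" for i
  proof -
    have "i \<in> orbit ?s i" using permutation_self_in_orbit[OF perm] .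
    then obtain t where t: "t > 0" "(?s ^^ t) i = i" unfolding orbit_altdef by auto
    obtain k where "k \<ge> t" "(?b ^^ k) (arr Q i) = arr Q ((?s ^^ t) i)"
      using stepT[OF assms(2) i] by blast
    then have "\<exists>m. arr Q i = (?b ^^ m) (arr Q i) \<and> 0 < m" using t by (intro exI[of _ k]) simp
    then show ?thesis unfolding orbit_altdef by (rule CollectI)
  qed
  have sub: "arr Q ` ?S \<subseteq> \<gamma>" using self og by blast
  have cyc: "cyclic_on ?s ?S"
  proof (rule cyclic_on_singleI[of 1])
    show "1 \<in> ?S" using assms(1) by auto
    show "?S = orbit ?s 1"
    proof
      show "orbit ?s 1 \<subseteq> ?S" using permutes_orbit_subset[OF sp] \<open>1 \<in> ?S\<close> by blast
    next
      show "?S \<subseteq> orbit ?s 1"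
      proof
        fix j assume j: "j \<in> ?S"
        have "arr Q j \<in> orbit ?b (arr Q 1)" using og[OF \<open>1 \<in> ?S\<close>] sub j by blast
        then obtain k where k: "(?b ^^ k) (arr Q 1) = arr Q j" unfolding orbit_altdef by auto
        obtain t where "(?b ^^ k) (arr Q 1) = arr Q ((?s ^^ t) 1)
           \<or> ((?b ^^ k) (arr Q 1) = Post (sigma1 n ((?s ^^ t) 1)) \<and> in_sub Q ((?s ^^ t) 1))"
          using invariant[OF assms(2) \<open>1 \<in> ?S\<close>] by blast
        then have "arr Q j = arr Q ((?s ^^ t) 1)" using k arr_nPost by metis
        then have "j = (?s ^^ t) 1" by (rule arr_inj)
        then show "j \<in> orbit ?s 1" unfolding orbit_altdef_permutation[OF perm] by blast
      qed
    qed
  qed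
  show ?thesis
    unfolding ordered_chord_diagram_def
    using sp cyc g sub step1[OF assms(2)] arr_inj
    by (intro conjI exI[of _ \<gamma>]) (auto intro: inj_onI)
qed

end
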